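(* Let $P$ be the set of primes and $S_P$ the group of permutations of $P$. For $\sigma\in S_P$ let $\hat\sigma$ be the unique automorphism of the multiplicative monoid $(\mathbb Q,\cdot)$ extending $\sigma$ (with $\hat\sigma(\pm1)=\pm1$, $\hat\sigma(0)=0$), and let $\mathbb Q_\sigma=(\mathbb Q,\cdot,+_\sigma)$ where $a+_\sigma b=\hat\sigma^{-1}(\hat\sigma(a)+\hat\sigma(b))$. Let $V_1=\bigoplus_{\sigma\in S_P}\mathbb Q_\sigma$ and $V_2=\bigoplus_{\sigma\in S_P\setminus\{\mathrm{id}\}}\mathbb Q_\sigma$, each a near vector space over $F=\mathbb Q$ (with $q\in\mathbb Q$ acting on the summand $\mathbb Q_\sigma$ by multiplication by $q$, and addition on each summand being $+_\sigma$). Then $BT(V_1)\neq BT(V_2)$ but $\bar F\cap\mathrm{Aut}(V_1)=\bar F\cap\mathrm{Aut}(V_2)$.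
   Context: A near vector space over $F$: $(V,+)$ a group, $F$ a set of endomorphisms containing $0,1,-1$, with $F\setminus\{0\}$ a subgroup of $\mathrm{Aut}(V,+)$, acting fixed point freely ($\alpha x=\beta x\Rightarrow\alpha=\beta$ or $x=0$), such that the quasi-kernel $Q(V)=\{u: \forall\alpha,\beta\in F\,\exists\gamma\in F\ \alpha u+\beta u=\gamma u\}$ generates $V$. For commutative $F$, $V$ decomposes as a direct sum of blocks (maximal regular near vector subspaces, each nonzero element of $Q(V)$ lying in exactly one), block $B_i$ being a vector space over a field $(F,+_{u_i},\circ)$ where $\alpha+_{u}\beta$ is the unique $\gamma$ with $\alpha u+\beta u=\gamma u$ for nonzero $u\in Q(V)\cap B_i$. The block type $BT(V)$ is the set of operations $\{+_{u_i}\}$ (equality as sets of operations). $\bar F$ is the set of formal finite sums $\alpha_1+_\cdot\cdots+_\cdot\alpha_n$ of elements of $F$, acting on $V$ by $v\mapsto\alpha_1(v)+\cdots+\alpha_n(v)$; $\bar F\cap\mathrm{Aut}(V)$ is the set of formal sums acting as automorphisms of $(V,+)$. *)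

theory Defs
  imports Complex_Main "HOL-Computational_Algebra.Primes"
begin

text \<open>A near vector space is given by a carrier V, an addition add, a zero
  and the scalar action sm (alpha acting on v). Here F is all of rat.\<close>

definition quasi_kernel :: "'v set \<Rightarrow> ('v \<Rightarrow> 'v \<Rightarrow> 'v) \<Rightarrow> (rat \<Rightarrow> 'v \<Rightarrow> 'v) \<Rightarrow> 'v set" where
  "quasi_kernel V add sm = {u \<in> V. \<forall>\<alpha> \<beta>. \<exists>\<gamma>. add (sm \<alpha> u) (sm \<beta> u) = sm \<gamma> u}"

definition u_add :: "('v \<Rightarrow> 'v \<Rightarrow> 'v) \<Rightarrow> (rat \<Rightarrow> 'v \<Rightarrow> 'v) \<Rightarrow> 'v \<Rightarrow> rat \<Rightarrow> rat \<Rightarrow> rat" where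
  "u_add add sm u = (\<lambda>\<alpha> \<beta>. THE \<gamma>. add (sm \<alpha> u) (sm \<beta> u) = sm \<gamma> u)"

text \<open>Block type: the set of operations +_u, u a nonzero element of Q(V)
  (each such u lies in exactly one block, and +_u is the block's addition).\<close>
definition block_type :: "'v set \<Rightarrow> ('v \<Rightarrow> 'v \<Rightarrow> 'v) \<Rightarrow> 'v \<Rightarrow> (rat \<Rightarrow> 'v \<Rightarrow> 'v)
    \<Rightarrow> (rat \<Rightarrow> rat \<Rightarrow> rat) set" where
  "block_type V add zero sm = {u_add add sm u | u. u \<in> quasi_kernel V add sm \<and> u \<noteq> zero}"

fun fsum_action :: "('v \<Rightarrow> 'v \<Rightarrow> 'v) \<Rightarrow> 'v \<Rightarrow> (rat \<Rightarrow> 'v \<Rightarrow> 'v) \<Rightarrow> rat list \<Rightarrow> 'v \<Rightarrow> 'v" where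
  "fsum_action add zero sm [] v = zero"
| "fsum_action add zero sm [\<alpha>] v = sm \<alpha> v"
| "fsum_action add zero sm (\<alpha> # \<beta> # \<alpha>s) v = add (sm \<alpha> v) (fsum_action add zero sm (\<beta> # \<alpha>s) v)"

definition is_group_aut :: "'v set \<Rightarrow> ('v \<Rightarrow> 'v \<Rightarrow> 'v) \<Rightarrow> ('v \<Rightarrow> 'v) \<Rightarrow> bool" where
  "is_group_aut V add f \<longleftrightarrow> bij_betw f V V \<and> (\<forall>x\<in>V. \<forall>y\<in>V. f (add x y) = add (f x) (f y))"

text \<open>F-bar intersected with Aut(V): formal (nonempty) sums acting as automorphisms of (V,+).\<close>
definition Fbar_Aut :: "'v set \<Rightarrow> ('v \<Rightarrow> 'v \<Rightarrow> 'v) \<Rightarrow> 'v \<Rightarrow> (rat \<Rightarrow> 'v \<Rightarrow> 'v) \<Rightarrow> rat list set" where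
  "Fbar_Aut V add zero sm = {\<alpha>s. \<alpha>s \<noteq> [] \<and> is_group_aut V add (fsum_action add zero sm \<alpha>s)}"

definition primes_set :: "nat set" where
  "primes_set = {p. prime p}"

definition S_P :: "(nat \<Rightarrow> nat) set" where
  "S_P = {\<sigma>. bij_betw \<sigma> primes_set primes_set \<and> (\<forall>n. \<not> prime n \<longrightarrow> \<sigma> n = n)}"

definition perm_inv :: "(nat \<Rightarrow> nat) \<Rightarrow> nat \<Rightarrow> nat" where
  "perm_inv \<sigma> = (\<lambda>n. if prime n then inv_into primes_set \<sigma> n else n)"

definition hat_int :: "(nat \<Rightarrow> nat) \<Rightarrow> int \<Rightarrow> int" where
  "hat_int \<sigma> a = sgn a * (\<Prod>p\<in>prime_factors (nat \<bar>a\<bar>). int (\<sigma> p) ^ multiplicity p (nat \<bar>a\<bar>))"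

definition hat :: "(nat \<Rightarrow> nat) \<Rightarrow> rat \<Rightarrow> rat" where
  "hat \<sigma> q = (case quotient_of q of (a, b) \<Rightarrow> of_int (hat_int \<sigma> a) / of_int (hat_int \<sigma> b))"

definition padd :: "(nat \<Rightarrow> nat) \<Rightarrow> rat \<Rightarrow> rat \<Rightarrow> rat" where
  "padd \<sigma> a b = hat (perm_inv \<sigma>) (hat \<sigma> a + hat \<sigma> b)"

definition dsum_carrier :: "(nat \<Rightarrow> nat) set \<Rightarrow> ((nat \<Rightarrow> nat) \<Rightarrow> rat) set" where
  "dsum_carrier I = {f. finite {\<sigma>. f \<sigma> \<noteq> 0} \<and> (\<forall>\<sigma>. \<sigma> \<notin> I \<longrightarrow> f \<sigma> = 0)}"

definition dsum_add :: "(nat \<Rightarrow> nat) set \<Rightarrow> ((nat \<Rightarrow> nat) \<Rightarrow> rat) \<Rightarrow> ((nat \<Rightarrow> nat) \<Rightarrow> rat) \<Rightarrow> (nat \<Rightarrow> nat) \<Rightarrow> rat" where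
  "dsum_add I f g = (\<lambda>\<sigma>. if \<sigma> \<in> I then padd \<sigma> (f \<sigma>) (g \<sigma>) else 0)"

definition dsum_smult :: "rat \<Rightarrow> ((nat \<Rightarrow> nat) \<Rightarrow> rat) \<Rightarrow> (nat \<Rightarrow> nat) \<Rightarrow> rat" where
  "dsum_smult q f = (\<lambda>\<sigma>. q * f \<sigma>)"

definition dsum_zero :: "(nat \<Rightarrow> nat) \<Rightarrow> rat" where
  "dsum_zero = (\<lambda>\<sigma>. 0)"

abbreviation I1 :: "(nat \<Rightarrow> nat) set" where "I1 \<equiv> S_P"
abbreviation I2 :: "(nat \<Rightarrow> nat) set" where "I2 \<equiv> S_P - {id}"

end

theory Submission
  imports Defs
begin

lemma hat_int_fix:
  assumes "\<And>q. q \<in> prime_factors (nat \<bar>a\<bar>) \<Longrightarrow> \<sigma> q = q"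
  shows "hat_int \<sigma> a = a"
proof (cases "a = 0")
  case True then show ?thesis by (simp add: hat_int_def)
next
  case False
  have "(\<Prod>p\<in>prime_factors (nat \<bar>a\<bar>). int (\<sigma> p) ^ multiplicity p (nat \<bar>a\<bar>))
      = (\<Prod>p\<in>prime_factors (nat \<bar>a\<bar>). int p ^ multiplicity p (nat \<bar>a\<bar>))"
    using assms by (intro prod.cong) auto
  also have "\<dots> = int (\<Prod>p\<in>prime_factors (nat \<bar>a\<bar>). p ^ multiplicity p (nat \<bar>a\<bar>))"
    by simp
  also have "\<dots> = int (nat \<bar>a\<bar>)" using False by (subst prod_prime_factors) auto
  finally have P: "(\<Prod>p\<in>prime_factors (nat \<bar>a\<bar>). int (\<sigma> p) ^ multiplicity p (nat \<bar>a\<bar>)) = \<bar>a\<bar>"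
    by simp
  show ?thesis unfolding hat_int_def P by (simp add: sgn_mult_abs)
qed

lemma hat_zero: "hat \<sigma> 0 = 0"
  by (simp add: hat_def hat_int_def)

lemma hat_fix:
  assumes "\<And>q. q \<in> prime_factors (nat \<bar>fst (quotient_of x)\<bar>) \<union> prime_factors (nat \<bar>snd (quotient_of x)\<bar>) \<Longrightarrow> \<sigma> q = q"
  shows "hat \<sigma> x = x"
proof -
  obtain a b where ab: "quotient_of x = (a, b)" by (cases "quotient_of x")
  have "hat_int \<sigma> a = a" using assms ab by (intro hat_int_fix) auto
  moreover have "hat_int \<sigma> b = b" using assms ab by (intro hat_int_fix) auto
  ultimately show ?thesis using ab quotient_of_div[OF ab] by (simp add: hat_def)
qed

lemma pf_le: "q \<in> prime_factors (n::nat) \<Longrightarrow> q \<le> n"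
  by (cases "n = 0") (auto intro: dvd_imp_le)

definition B :: "rat \<Rightarrow> nat" where
  "B x = nat \<bar>fst (quotient_of x)\<bar> + nat \<bar>snd (quotient_of x)\<bar>"

lemma hat_fixB:
  assumes "\<And>q. q \<le> B x \<Longrightarrow> \<sigma> q = q"
  shows "hat \<sigma> x = x"
  apply (rule hat_fix) using assms pf_le unfolding B_def
  by (metis Un_iff le_add1 le_add2 order_trans)

lemma hat_id: "hat id x = x"
  by (rule hat_fix) simp

lemma perm_inv_id: "perm_inv id = id"
  unfolding perm_inv_def primes_set_def by (auto simp: inv_into_def intro!: some_equality)

lemma padd_zero: "padd \<sigma> 0 0 = 0"
  by (simp add: padd_def hat_zero)

lemma padd_id: "padd id a b = a + b"
  by (simp add: padd_def perm_inv_id hat_id)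

lemma hat_prime:
  assumes "prime p" shows "hat \<tau> (of_nat p) = of_nat (\<tau> p)"
proof -
  have q: "quotient_of (of_nat p :: rat) = (int p, 1)"
    by (metis of_int_of_nat_eq quotient_of_rat_of_int)
  have "hat_int \<tau> (int p) = int (\<tau> p)"
    using assms by (simp add: hat_int_def prime_prime_factors multiplicity_self sgn_if prime_gt_0_nat)
  moreover have "hat_int \<tau> 1 = 1" by (simp add: hat_int_def)
  ultimately show ?thesis by (simp add: hat_def q)
qed

lemma SP_fix_inv:
  assumes "\<sigma> \<in> S_P" "\<sigma> q = q" shows "perm_inv \<sigma> q = q"
proof (cases "prime q")
  case True
  have inj: "inj_on \<sigma> primes_set" using assms(1) unfolding S_P_def bij_betw_def by auto
  have qP: "q \<in> primes_set" using True unfolding primes_set_def by simp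
  have "inv_into primes_set \<sigma> (\<sigma> q) = q" by (rule inv_into_f_f[OF inj qP])
  then show ?thesis using True assms(2) unfolding perm_inv_def by simp
qed (simp add: perm_inv_def)

lemma SP_inv_fix:
  assumes "\<sigma> \<in> S_P" "perm_inv \<sigma> q = q" shows "\<sigma> q = q"
proof (cases "prime q")
  case True
  then have "q \<in> \<sigma> ` primes_set" using assms unfolding S_P_def primes_set_def bij_betw_def by auto
  then have "\<sigma> (inv_into primes_set \<sigma> q) = q" by (rule f_inv_into_f)
  then show ?thesis using assms(2) True unfolding perm_inv_def by simp
next
  case False then show ?thesis using assms unfolding S_P_def by auto
qed

lemma SP_nonid_prime:
  assumes "\<sigma> \<in> S_P" "\<sigma> \<noteq> id"
  shows "\<exists>q. prime q \<and> perm_inv \<sigma> q \<noteq> q"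
proof -
  obtain n where n: "\<sigma> n \<noteq> n" using assms(2) by (meson eq_id_iff)
  then have pn: "prime n" using assms(1) unfolding S_P_def by auto
  then have "prime (\<sigma> n)" using assms(1) unfolding S_P_def primes_set_def bij_betw_def by auto
  moreover have "perm_inv \<sigma> (\<sigma> n) = n"
    using assms(1) pn \<open>prime (\<sigma> n)\<close> unfolding S_P_def perm_inv_def primes_set_def bij_betw_def
    by (simp add: inv_into_f_f)
  ultimately show ?thesis using n by metis
qed

lemma not_add:
  assumes "\<sigma> \<in> S_P" "\<sigma> \<noteq> id"
  shows "\<exists>a b. padd \<sigma> a b \<noteq> a + b"
proof -
  define p where "p = (LEAST q. prime q \<and> perm_inv \<sigma> q \<noteq> q)"
  have pp: "prime p \<and> perm_inv \<sigma> p \<noteq> p"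
    unfolding p_def using SP_nonid_prime[OF assms] by (metis (mono_tags, lifting) LeastI)
  have small: "\<sigma> q = q" if "prime q" "q < p" for q
  proof -
    have "perm_inv \<sigma> q = q" using that not_less_Least p_def by blast
    then show ?thesis using SP_inv_fix assms(1) by blast
  qed
  have p1: "p \<ge> 1" using pp prime_gt_0_nat[of p] by linarith
  have h1: "hat \<sigma> (of_nat (p - 1)) = of_nat (p - 1)"
  proof (rule hat_fix)
    fix q assume q: "q \<in> prime_factors (nat \<bar>fst (quotient_of (of_nat (p - 1) :: rat))\<bar>) \<union>
        prime_factors (nat \<bar>snd (quotient_of (of_nat (p - 1) :: rat))\<bar>)"
    have qq: "quotient_of (of_nat (p - 1) :: rat) = (int (p - 1), 1)"
      by (metis of_int_of_nat_eq quotient_of_rat_of_int)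
    from q have "q \<in> prime_factors (p - 1)" by (simp add: qq)
    then have "prime q" "q \<le> p - 1" using pf_le by auto
    then show "\<sigma> q = q" using small p1 by (metis One_nat_def Suc_pred' le_imp_less_Suc less_le_trans not_le not_less_eq_eq prime_gt_0_nat)
  qed
  have h2: "hat \<sigma> 1 = 1" by (rule hat_fix) simp
  have "padd \<sigma> (of_nat (p - 1)) 1 = hat (perm_inv \<sigma>) (of_nat p)"
    unfolding padd_def h1 h2 using p1 by (simp add: of_nat_diff)
  also have "\<dots> = of_nat (perm_inv \<sigma> p)" using pp hat_prime by blast
  also have "\<dots> \<noteq> of_nat (p - 1) + 1" using pp p1 by (simp add: of_nat_diff)
  finally show ?thesis by blast
qed

definition e :: "(nat \<Rightarrow> nat) \<Rightarrow> rat \<Rightarrow> (nat \<Rightarrow> nat) \<Rightarrow> rat" where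
  "e \<sigma> x = (\<lambda>\<tau>. if \<tau> = \<sigma> then x else 0)"

lemma e_carrier: "\<sigma> \<in> I \<Longrightarrow> e \<sigma> x \<in> dsum_carrier I"
  unfolding e_def dsum_carrier_def by (auto intro: finite_subset[of _ "{\<sigma>}"])

lemma id_SP: "id \<in> S_P"
  unfolding S_P_def by auto

lemma BT1: "(+) \<in> block_type (dsum_carrier I1) (dsum_add I1) dsum_zero dsum_smult"
proof -
  let ?u = "e id 1"
  have eq: "dsum_add I1 (dsum_smult \<alpha> ?u) (dsum_smult \<beta> ?u) = dsum_smult \<gamma> ?u \<longleftrightarrow> \<gamma> = \<alpha> + \<beta>"
    for \<alpha> \<beta> \<gamma>
  proof
    assume "dsum_add I1 (dsum_smult \<alpha> ?u) (dsum_smult \<beta> ?u) = dsum_smult \<gamma> ?u"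
    from fun_cong[OF this, of id] show "\<gamma> = \<alpha> + \<beta>"
      using id_SP by (simp add: dsum_add_def dsum_smult_def e_def padd_id)
  next
    assume "\<gamma> = \<alpha> + \<beta>"
    then show "dsum_add I1 (dsum_smult \<alpha> ?u) (dsum_smult \<beta> ?u) = dsum_smult \<gamma> ?u"
      using id_SP by (auto simp: dsum_add_def dsum_smult_def e_def padd_id padd_zero)
  qed
  have qk: "?u \<in> quasi_kernel (dsum_carrier I1) (dsum_add I1) dsum_smult"
    unfolding quasi_kernel_def using e_carrier[OF id_SP] eq by blast
  have ne: "?u \<noteq> dsum_zero" unfolding e_def dsum_zero_def by (metis zero_neq_one)
  have "u_add (dsum_add I1) dsum_smult ?u = (+)"
    unfolding u_add_def eq by simp
  then show ?thesis unfolding block_type_def using qk ne by (metis (mono_tags, lifting) mem_Collect_eq)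
qed

lemma BT2: "(+) \<notin> block_type (dsum_carrier I2) (dsum_add I2) dsum_zero dsum_smult"
proof
  assume "(+) \<in> block_type (dsum_carrier I2) (dsum_add I2) dsum_zero dsum_smult"
  then obtain u where qk: "u \<in> quasi_kernel (dsum_carrier I2) (dsum_add I2) dsum_smult"
    and ne: "u \<noteq> dsum_zero" and ua: "u_add (dsum_add I2) dsum_smult u = (+)"
    unfolding block_type_def by auto
  obtain \<sigma> where c: "u \<sigma> \<noteq> 0" using ne unfolding dsum_zero_def by auto
  have uc: "u \<in> dsum_carrier I2" using qk unfolding quasi_kernel_def by auto
  then have sI: "\<sigma> \<in> I2" using c unfolding dsum_carrier_def by auto
  have "padd \<sigma> a b = a + b" for a b
  proof -
    define \<alpha> where "\<alpha> = a / u \<sigma>"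
    define \<beta> where "\<beta> = b / u \<sigma>"
    obtain \<gamma> where g: "dsum_add I2 (dsum_smult \<alpha> u) (dsum_smult \<beta> u) = dsum_smult \<gamma> u"
      using qk unfolding quasi_kernel_def by blast
    have "u_add (dsum_add I2) dsum_smult u \<alpha> \<beta> = \<gamma>"
      unfolding u_add_def
    proof (rule the_equality)
      fix \<gamma>' assume "dsum_add I2 (dsum_smult \<alpha> u) (dsum_smult \<beta> u) = dsum_smult \<gamma>' u"
      with g have "dsum_smult \<gamma>' u \<sigma> = dsum_smult \<gamma> u \<sigma>" by simp
      then show "\<gamma>' = \<gamma>" using c by (simp add: dsum_smult_def)
    qed (rule g)
    then have "\<gamma> = \<alpha> + \<beta>" using ua by simp
    with fun_cong[OF g, of \<sigma>] sI have "padd \<sigma> (\<alpha> * u \<sigma>) (\<beta> * u \<sigma>) = (\<alpha> + \<beta>) * u \<sigma>"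
      by (simp add: dsum_add_def dsum_smult_def)
    then have "u \<sigma> * padd \<sigma> a b = u \<sigma> * (a + b)" using c by (simp add: \<alpha>_def \<beta>_def field_simps)
    then show ?thesis using c by simp
  qed
  then show False using not_add[of \<sigma>] sI by auto
qed

fun F :: "(nat \<Rightarrow> nat) \<Rightarrow> rat list \<Rightarrow> rat \<Rightarrow> rat" where
  "F \<sigma> [] x = 0"
| "F \<sigma> [\<alpha>] x = \<alpha> * x"
| "F \<sigma> (\<alpha> # \<beta> # r) x = padd \<sigma> (\<alpha> * x) (F \<sigma> (\<beta> # r) x)"

lemma F0: "F \<sigma> as 0 = 0"
  by (induction \<sigma> as "0::rat" rule: F.induct) (auto simp: padd_zero)

lemma comp:
  assumes "v \<in> dsum_carrier I" "as \<noteq> []"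
  shows "fsum_action (dsum_add I) dsum_zero dsum_smult as v = (\<lambda>\<sigma>. if \<sigma> \<in> I then F \<sigma> as (v \<sigma>) else 0)"
  using assms
proof (induction "dsum_add I" dsum_zero dsum_smult as v rule: fsum_action.induct)
  case (2 \<alpha> v)
  then show ?case by (auto simp: dsum_smult_def dsum_carrier_def)
next
  case (3 \<alpha> \<beta> r v)
  then show ?case by (auto simp: dsum_smult_def dsum_add_def)
qed simp

lemma add_carrier:
  assumes "x \<in> dsum_carrier I" "y \<in> dsum_carrier I"
  shows "dsum_add I x y \<in> dsum_carrier I"
proof -
  have "{\<sigma>. dsum_add I x y \<sigma> \<noteq> 0} \<subseteq> {\<sigma>. x \<sigma> \<noteq> 0} \<union> {\<sigma>. y \<sigma> \<noteq> 0}"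
    by (auto simp: dsum_add_def padd_zero)
  moreover have "finite ({\<sigma>. x \<sigma> \<noteq> 0} \<union> {\<sigma>. y \<sigma> \<noteq> 0})"
    using assms unfolding dsum_carrier_def by auto
  ultimately have "finite {\<sigma>. dsum_add I x y \<sigma> \<noteq> 0}" by (rule finite_subset)
  then show ?thesis unfolding dsum_carrier_def by (simp add: dsum_add_def)
qed

definition good :: "(nat \<Rightarrow> nat) \<Rightarrow> rat list \<Rightarrow> bool" where
  "good \<sigma> as \<longleftrightarrow> bij (F \<sigma> as) \<and> (\<forall>x y. F \<sigma> as (padd \<sigma> x y) = padd \<sigma> (F \<sigma> as x) (F \<sigma> as y))"

lemma aut_iff:
  assumes ne: "as \<noteq> []"
  shows "is_group_aut (dsum_carrier I) (dsum_add I) (fsum_action (dsum_add I) dsum_zero dsum_smult as)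
     \<longleftrightarrow> (\<forall>\<sigma>\<in>I. good \<sigma> as)"
  (is "is_group_aut ?V ?add ?A \<longleftrightarrow> _")
proof
  assume aut: "is_group_aut ?V ?add ?A"
  show "\<forall>\<sigma>\<in>I. good \<sigma> as"
  proof
    fix \<sigma> assume sI: "\<sigma> \<in> I"
    have Ae: "?A (e \<sigma> x) = e \<sigma> (F \<sigma> as x)" for x
      using comp[OF e_carrier[OF sI] ne] sI by (auto simp: e_def F0)
    have bj: "bij_betw ?A ?V ?V" and hom: "\<forall>x\<in>?V. \<forall>y\<in>?V. ?A (?add x y) = ?add (?A x) (?A y)"
      using aut unfolding is_group_aut_def by auto
    have einj: "e \<sigma> x = e \<sigma> y \<Longrightarrow> x = y" for x y
      unfolding e_def by (metis)
    have "inj (F \<sigma> as)"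
    proof (rule injI)
      fix x y assume "F \<sigma> as x = F \<sigma> as y"
      then have "?A (e \<sigma> x) = ?A (e \<sigma> y)" by (simp add: Ae)
      then show "x = y" using bj e_carrier[OF sI] einj unfolding bij_betw_def inj_on_def by blast
    qed
    moreover have "surj (F \<sigma> as)"
    proof -
      have "y \<in> range (F \<sigma> as)" for y
      proof -
        obtain v where "v \<in> ?V" "?A v = e \<sigma> y"
          using bj e_carrier[OF sI] unfolding bij_betw_def by (metis imageE)
        then have "F \<sigma> as (v \<sigma>) = y" using comp[OF _ ne, of v I] sI
          by (metis e_def)
        then show ?thesis by blast
      qed
      then show ?thesis by blast
    qed
    moreover have "F \<sigma> as (padd \<sigma> x y) = padd \<sigma> (F \<sigma> as x) (F \<sigma> as y)" for x y
    proof -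
      have ee: "?add (e \<sigma> a) (e \<sigma> b) = e \<sigma> (padd \<sigma> a b)" for a b
        using sI by (auto simp: dsum_add_def e_def padd_zero)
      have "?A (?add (e \<sigma> x) (e \<sigma> y)) = ?add (?A (e \<sigma> x)) (?A (e \<sigma> y))"
        using hom e_carrier[OF sI] by blast
      then have "e \<sigma> (F \<sigma> as (padd \<sigma> x y)) = e \<sigma> (padd \<sigma> (F \<sigma> as x) (F \<sigma> as y))"
        by (simp add: ee Ae)
      then show ?thesis using einj by blast
    qed
    ultimately show "good \<sigma> as" unfolding good_def bij_def by blast
  qed
next
  assume g: "\<forall>\<sigma>\<in>I. good \<sigma> as"
  have cA: "?A v = (\<lambda>\<sigma>. if \<sigma> \<in> I then F \<sigma> as (v \<sigma>) else 0)" if "v \<in> ?V" for v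
    using comp[OF that ne] .
  have maps: "?A v \<in> ?V" if v: "v \<in> ?V" for v
  proof -
    have "{\<sigma>. ?A v \<sigma> \<noteq> 0} \<subseteq> {\<sigma>. v \<sigma> \<noteq> 0}" by (auto simp: cA[OF v] F0)
    moreover have "finite {\<sigma>. v \<sigma> \<noteq> 0}" using v unfolding dsum_carrier_def by auto
    ultimately have "finite {\<sigma>. ?A v \<sigma> \<noteq> 0}" by (rule finite_subset)
    then show ?thesis unfolding dsum_carrier_def by (simp add: cA[OF v])
  qed
  have inj: "inj_on ?A ?V"
  proof (rule inj_onI)
    fix v w assume v: "v \<in> ?V" and w: "w \<in> ?V" and eq: "?A v = ?A w"
    show "v = w"
    proof
      fix \<sigma> show "v \<sigma> = w \<sigma>"
      proof (cases "\<sigma> \<in> I")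
        case True
        then have "F \<sigma> as (v \<sigma>) = F \<sigma> as (w \<sigma>)" using fun_cong[OF eq, of \<sigma>] cA v w by simp
        then show ?thesis using g True unfolding good_def bij_def inj_def by blast
      next
        case False then show ?thesis using v w unfolding dsum_carrier_def by auto
      qed
    qed
  qed
  have surj: "w \<in> ?A ` ?V" if w: "w \<in> ?V" for w
  proof -
    define v where "v = (\<lambda>\<sigma>. if \<sigma> \<in> I then inv (F \<sigma> as) (w \<sigma>) else 0)"
    have fi: "F \<sigma> as (inv (F \<sigma> as) y) = y" if "\<sigma> \<in> I" for \<sigma> y
      using g that unfolding good_def by (simp add: bij_def surj_f_inv_f)
    have i0: "inv (F \<sigma> as) 0 = 0" if "\<sigma> \<in> I" for \<sigma>
      using g that F0 unfolding good_def by (metis bij_def inv_f_f)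
    have "{\<sigma>. v \<sigma> \<noteq> 0} \<subseteq> {\<sigma>. w \<sigma> \<noteq> 0}" unfolding v_def using i0 by auto
    moreover have "finite {\<sigma>. w \<sigma> \<noteq> 0}" using w unfolding dsum_carrier_def by auto
    ultimately have "finite {\<sigma>. v \<sigma> \<noteq> 0}" by (rule finite_subset)
    then have vV: "v \<in> ?V" unfolding dsum_carrier_def by (simp add: v_def)
    have "?A v = w"
    proof
      fix \<sigma>
      have "?A v \<sigma> = (if \<sigma> \<in> I then F \<sigma> as (v \<sigma>) else 0)" using cA[OF vV] by simp
      then show "?A v \<sigma> = w \<sigma>"
        using w fi by (auto simp: v_def dsum_carrier_def)
    qed
    then show ?thesis using vV by blast
  qed
  have hom: "?A (?add x y) = ?add (?A x) (?A y)" if x: "x \<in> ?V" and y: "y \<in> ?V" for x y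
    using g unfolding cA[OF add_carrier[OF x y]] cA[OF x] cA[OF y] good_def
    by (auto simp: dsum_add_def)
  show "is_group_aut ?V ?add ?A"
    unfolding is_group_aut_def bij_betw_def using inj maps surj hom by blast
qed

lemma F_id: "as \<noteq> [] \<Longrightarrow> F id as x = sum_list as * x"
  by (induction as rule: induct_list012) (auto simp: padd_id algebra_simps)

lemma good_id: assumes "as \<noteq> []" shows "good id as \<longleftrightarrow> sum_list as \<noteq> 0"
proof
  assume "good id as"
  then have "inj (F id as)" unfolding good_def bij_def by auto
  then have "F id as 1 \<noteq> F id as 0" by (metis injD zero_neq_one)
  then show "sum_list as \<noteq> 0" using F_id[OF assms] by auto
next
  assume nz: "sum_list as \<noteq> 0"
  have "bij (\<lambda>x. sum_list as * x)"
    by (rule bij_betw_byWitness[where f'="\<lambda>x. x / sum_list as"]) (use nz in auto)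
  then show "good id as" unfolding good_def F_id[OF assms] padd_id
    by (auto simp: algebra_simps)
qed

lemma F_one: "\<exists>N. \<forall>\<sigma>\<in>S_P. (\<forall>q\<le>N. \<sigma> q = q) \<longrightarrow> F \<sigma> as 1 = sum_list as"
proof (induction as rule: induct_list012)
  case (3 \<alpha> \<beta> r)
  obtain N where N: "\<forall>\<sigma>\<in>S_P. (\<forall>q\<le>N. \<sigma> q = q) \<longrightarrow> F \<sigma> (\<beta> # r) 1 = sum_list (\<beta> # r)"
    using 3(2) by blast
  define s where "s = sum_list (\<beta> # r)"
  define M where "M = max N (max (B \<alpha>) (max (B s) (B (\<alpha> + s))))"
  have "F \<sigma> (\<alpha> # \<beta> # r) 1 = sum_list (\<alpha> # \<beta> # r)"
    if sS: "\<sigma> \<in> S_P" and fx: "\<forall>q\<le>M. \<sigma> q = q" for \<sigma>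
  proof -
    have "F \<sigma> (\<beta> # r) 1 = s" using N sS fx unfolding M_def s_def by auto
    moreover have "hat \<sigma> \<alpha> = \<alpha>" by (rule hat_fixB) (use fx in \<open>auto simp: M_def\<close>)
    moreover have "hat \<sigma> s = s" by (rule hat_fixB) (use fx in \<open>auto simp: M_def\<close>)
    moreover have "hat (perm_inv \<sigma>) (\<alpha> + s) = \<alpha> + s"
      by (rule hat_fixB) (use fx SP_fix_inv[OF sS] in \<open>auto simp: M_def\<close>)
    ultimately show ?thesis by (simp add: padd_def s_def)
  qed
  then show ?case by blast
qed auto

lemma exists_swap: "\<exists>\<sigma>\<in>S_P. \<sigma> \<noteq> id \<and> (\<forall>q\<le>N. \<sigma> q = q)"
proof -
  obtain p1 where p1: "prime p1" "p1 > N" using bigger_prime by blast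
  obtain p2 where p2: "prime p2" "p2 > p1" using bigger_prime by blast
  define \<sigma> where "\<sigma> = (\<lambda>n::nat. if n = p1 then p2 else if n = p2 then p1 else n)"
  have inv: "\<sigma> (\<sigma> n) = n" for n unfolding \<sigma>_def by auto
  have "bij_betw \<sigma> primes_set primes_set"
  proof (rule bij_betw_byWitness[where f'=\<sigma>])
    show "\<forall>a\<in>primes_set. \<sigma> (\<sigma> a) = a" using inv by blast
    show "\<forall>a\<in>primes_set. \<sigma> (\<sigma> a) = a" using inv by blast
    show "\<sigma> ` primes_set \<subseteq> primes_set"
      using p1(1) p2(1) unfolding primes_set_def \<sigma>_def by auto
    then show "\<sigma> ` primes_set \<subseteq> primes_set" .
  qed
  moreover have "\<forall>n. \<not> prime n \<longrightarrow> \<sigma> n = n" using p1 p2 unfolding \<sigma>_def by auto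
  ultimately have "\<sigma> \<in> S_P" unfolding S_P_def by blast
  moreover have "\<sigma> \<noteq> id"
  proof
    assume "\<sigma> = id"
    then have "\<sigma> p1 = p1" by simp
    moreover have "\<sigma> p1 = p2" unfolding \<sigma>_def by simp
    ultimately show False using p2(2) by simp
  qed
  moreover have "\<forall>q\<le>N. \<sigma> q = q" using p1 p2 unfolding \<sigma>_def by auto
  ultimately show ?thesis by blast
qed

lemma good_I2_id:
  assumes ne: "as \<noteq> []" and g: "\<forall>\<sigma>\<in>I2. good \<sigma> as"
  shows "good id as"
proof -
  obtain N where N: "\<forall>\<sigma>\<in>S_P. (\<forall>q\<le>N. \<sigma> q = q) \<longrightarrow> F \<sigma> as 1 = sum_list as"
    using F_one by blast
  obtain \<sigma> where s: "\<sigma> \<in> S_P" "\<sigma> \<noteq> id" "\<forall>q\<le>N. \<sigma> q = q" using exists_swap by blast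
  have "inj (F \<sigma> as)" using g s unfolding good_def bij_def by auto
  then have "F \<sigma> as 1 \<noteq> F \<sigma> as 0" by (metis injD zero_neq_one)
  then have "sum_list as \<noteq> 0" using N s F0 by metis
  then show ?thesis using good_id[OF ne] by blast
qed

theorem mainTheorem9:
  shows "block_type (dsum_carrier I1) (dsum_add I1) dsum_zero dsum_smult
           \<noteq> block_type (dsum_carrier I2) (dsum_add I2) dsum_zero dsum_smult
         \<and> Fbar_Aut (dsum_carrier I1) (dsum_add I1) dsum_zero dsum_smult
           = Fbar_Aut (dsum_carrier I2) (dsum_add I2) dsum_zero dsum_smult"
proof
  show "block_type (dsum_carrier I1) (dsum_add I1) dsum_zero dsum_smult
           \<noteq> block_type (dsum_carrier I2) (dsum_add I2) dsum_zero dsum_smult"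
  proof
    assume "block_type (dsum_carrier I1) (dsum_add I1) dsum_zero dsum_smult
           = block_type (dsum_carrier I2) (dsum_add I2) dsum_zero dsum_smult"
    with BT1 BT2 show False by simp
  qed
next
  have gg: "(\<forall>\<sigma>\<in>I1. good \<sigma> as) \<longleftrightarrow> (\<forall>\<sigma>\<in>I2. good \<sigma> as)" if "as \<noteq> []" for as
  proof
    assume "\<forall>\<sigma>\<in>I2. good \<sigma> as"
    moreover then have "good id as" using good_I2_id[OF that] by blast
    ultimately show "\<forall>\<sigma>\<in>I1. good \<sigma> as" by blast
  qed blast
  show "Fbar_Aut (dsum_carrier I1) (dsum_add I1) dsum_zero dsum_smult
           = Fbar_Aut (dsum_carrier I2) (dsum_add I2) dsum_zero dsum_smult"
    unfolding Fbar_Aut_def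
  proof (intro Collect_cong conj_cong refl)
    fix as :: "rat list" assume ne: "as \<noteq> []"
    show "is_group_aut (dsum_carrier I1) (dsum_add I1) (fsum_action (dsum_add I1) dsum_zero dsum_smult as)
      \<longleftrightarrow> is_group_aut (dsum_carrier I2) (dsum_add I2) (fsum_action (dsum_add I2) dsum_zero dsum_smult as)"
      unfolding aut_iff[OF ne] using gg[OF ne] .
  qed
qed

end
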